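(* Let $\Lambda=k(\Gamma,\mathcal{A})$ be a generalized path algebra without relations. Let $i\in\Gamma_0$, $1\le j\le s_i$, and let $((M_l)_{l\in\Gamma_0},(\phi_\alpha)_{\alpha\in\Gamma_1})$ be the representation of $P(i,j)=\overline{e_{ij}}\Lambda$. Then: - $M_i=P_i^j=e_{ij}A_i$; - for $l\neq i$, $M_l\cong A_l^{n_l}$ as $A_l$-modules, where $$n_l=\sum_{\gamma:\,i=i_0\to i_1\to\cdots\to i_r=l}(\dim_kP_i^j)(\dim_kA_{i_1})\cdots(\dim_kA_{i_{r-1}}),$$ summed over all paths $\gamma$ from $i$ to $l$ in $\Gamma$. In particular $M_l=0$ if there is no path from $i$ to $l$.
   Context: $k$ is an algebraically closed field, $\Gamma$ a finite acyclic quiver, and $\mathcal{A}=\{A_i:i\in\Gamma_0\}$ finite-dimensional basic $k$-algebras. The generalized path algebra $k(\Gamma,\mathcal{A})$ is spanned by $\mathcal{A}$-paths $a_1\beta_1\cdots a_n\beta_na_{n+1}$ ($\beta_1\cdots\beta_n$ a path of $\Gamma$, $a_i\in A_{s(\beta_i)}$, $a_{n+1}\in A_{e(\beta_n)}$), modulo multilinearity, with concatenation product (multiplying adjacent algebra entries, or $0$ if paths don't compose). For each $i$, $\{e_{i1},\dots,e_{is_i}\}$ is a complete set of primitive pairwise orthogonal idempotents of $A_i$. $P_i^j=e_{ij}A_i$, and $\overline{e_{ij}}$ is the class of $e_{ij}$ in $\Lambda$. The representation of a right $\Lambda$-module $X$ has $X_l=X\cdot1_l$ ($1_l$ the identity of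 $A_l$) and $\phi_\alpha(x)=x\alpha$. *)

theory Defs
  imports "HOL-Computational_Algebra.Polynomial" "HOL-Library.Function_Algebras"
begin

text \<open>A finite-dimensional k-algebra A of dimension d is represented by its basis
  b_0,...,b_(d-1), structure constants c (b_p b_q = sum_m c p q m b_m) and the
  coordinates u of its unit.\<close>

definition vec :: "nat \<Rightarrow> (nat \<Rightarrow> 'k::zero) set" where
  "vec d = {x. \<forall>n\<ge>d. x n = 0}"

definition vzero :: "nat \<Rightarrow> 'k::zero" where "vzero = (\<lambda>_. 0)"

definition vadd :: "('i \<Rightarrow> 'k::plus) \<Rightarrow> ('i \<Rightarrow> 'k) \<Rightarrow> 'i \<Rightarrow> 'k" where
  "vadd x y = (\<lambda>n. x n + y n)"

definition vscale :: "'k::times \<Rightarrow> ('i \<Rightarrow> 'k) \<Rightarrow> 'i \<Rightarrow> 'k" where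
  "vscale c x = (\<lambda>n. c * x n)"

definition amult :: "(nat \<Rightarrow> nat \<Rightarrow> nat \<Rightarrow> 'k::field) \<Rightarrow> nat
    \<Rightarrow> (nat \<Rightarrow> 'k) \<Rightarrow> (nat \<Rightarrow> 'k) \<Rightarrow> (nat \<Rightarrow> 'k)" where
  "amult c d x y = (\<lambda>m. if m < d then (\<Sum>p<d. \<Sum>q<d. x p * y q * c p q m) else 0)"

definition fd_algebra :: "nat \<Rightarrow> (nat \<Rightarrow> nat \<Rightarrow> nat \<Rightarrow> 'k::field) \<Rightarrow> (nat \<Rightarrow> 'k) \<Rightarrow> bool" where
  "fd_algebra d c u \<longleftrightarrow> u \<in> vec d
     \<and> (\<forall>x\<in>vec d. amult c d u x = x \<and> amult c d x u = x)
     \<and> (\<forall>x\<in>vec d. \<forall>y\<in>vec d. \<forall>z\<in>vec d.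
          amult c d (amult c d x y) z = amult c d x (amult c d y z))"

definition idempotent_in :: "nat \<Rightarrow> (nat \<Rightarrow> nat \<Rightarrow> nat \<Rightarrow> 'k::field) \<Rightarrow> (nat \<Rightarrow> 'k) \<Rightarrow> bool" where
  "idempotent_in d c e \<longleftrightarrow> e \<in> vec d \<and> amult c d e e = e"

definition primitive_idempotent :: "nat \<Rightarrow> (nat \<Rightarrow> nat \<Rightarrow> nat \<Rightarrow> 'k::field) \<Rightarrow> (nat \<Rightarrow> 'k) \<Rightarrow> bool" where
  "primitive_idempotent d c e \<longleftrightarrow> idempotent_in d c e \<and> e \<noteq> vzero
     \<and> (\<forall>f g. idempotent_in d c f \<and> idempotent_in d c g
          \<and> amult c d f g = vzero \<and> amult c d g f = vzero \<and> e = vadd f g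
          \<longrightarrow> f = vzero \<or> g = vzero)"

definition complete_prim_orth :: "nat \<Rightarrow> (nat \<Rightarrow> nat \<Rightarrow> nat \<Rightarrow> 'k::field) \<Rightarrow> (nat \<Rightarrow> 'k)
    \<Rightarrow> (nat \<Rightarrow> nat \<Rightarrow> 'k) \<Rightarrow> nat \<Rightarrow> bool" where
  "complete_prim_orth d c u e s \<longleftrightarrow>
     (\<forall>j\<in>{1..s}. primitive_idempotent d c (e j))
     \<and> (\<forall>j\<in>{1..s}. \<forall>j'\<in>{1..s}. j \<noteq> j' \<longrightarrow> amult c d (e j) (e j') = vzero)
     \<and> (\<lambda>n. \<Sum>j=1..s. e j n) = u"

definition rideal :: "nat \<Rightarrow> (nat \<Rightarrow> nat \<Rightarrow> nat \<Rightarrow> 'k::field) \<Rightarrow> (nat \<Rightarrow> 'k) \<Rightarrow> (nat \<Rightarrow> 'k) set" where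
  "rideal d c x = {amult c d x a | a. a \<in> vec d}"

definition rmod_iso :: "nat \<Rightarrow> (nat \<Rightarrow> nat \<Rightarrow> nat \<Rightarrow> 'k::field) \<Rightarrow> (nat \<Rightarrow> 'k) set \<Rightarrow> (nat \<Rightarrow> 'k) set \<Rightarrow> bool" where
  "rmod_iso d c X Y \<longleftrightarrow> (\<exists>h. bij_betw h X Y
     \<and> (\<forall>x\<in>X. \<forall>y\<in>X. h (vadd x y) = vadd (h x) (h y))
     \<and> (\<forall>k x. x \<in> X \<longrightarrow> h (vscale k x) = vscale k (h x))
     \<and> (\<forall>a\<in>vec d. \<forall>x\<in>X. h (amult c d x a) = amult c d (h x) a))"

definition basic_algebra :: "nat \<Rightarrow> (nat \<Rightarrow> nat \<Rightarrow> nat \<Rightarrow> 'k::field) \<Rightarrow> (nat \<Rightarrow> nat \<Rightarrow> 'k) \<Rightarrow> nat \<Rightarrow> bool" where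
  "basic_algebra d c e s \<longleftrightarrow> (\<forall>j\<in>{1..s}. \<forall>j'\<in>{1..s}. j \<noteq> j' \<longrightarrow>
      \<not> rmod_iso d c (rideal d c (e j)) (rideal d c (e j')))"

definition kdim :: "(nat \<Rightarrow> 'k::field) set \<Rightarrow> nat" where
  "kdim S = vector_space.dim (vscale :: 'k \<Rightarrow> (nat \<Rightarrow> 'k) \<Rightarrow> _) S"

fun qpath :: "'v set \<Rightarrow> 'e set \<Rightarrow> ('e \<Rightarrow> 'v) \<Rightarrow> ('e \<Rightarrow> 'v) \<Rightarrow> 'v \<Rightarrow> 'e list \<Rightarrow> bool" where
  "qpath V E src tgt v [] = (v \<in> V)"
| "qpath V E src tgt v (b # bs) = (v \<in> V \<and> b \<in> E \<and> src b = v \<and> qpath V E src tgt (tgt b) bs)"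

fun pend :: "('e \<Rightarrow> 'v) \<Rightarrow> 'v \<Rightarrow> 'e list \<Rightarrow> 'v" where
  "pend tgt v [] = v"
| "pend tgt v (b # bs) = pend tgt (tgt b) bs"

fun pverts :: "('e \<Rightarrow> 'v) \<Rightarrow> 'v \<Rightarrow> 'e list \<Rightarrow> 'v list" where
  "pverts tgt v [] = [v]"
| "pverts tgt v (b # bs) = v # pverts tgt (tgt b) bs"

definition finite_quiver :: "'v set \<Rightarrow> 'e set \<Rightarrow> ('e \<Rightarrow> 'v) \<Rightarrow> ('e \<Rightarrow> 'v) \<Rightarrow> bool" where
  "finite_quiver V E src tgt \<longleftrightarrow> finite V \<and> finite E \<and> src ` E \<subseteq> V \<and> tgt ` E \<subseteq> V"

definition acyclic_quiver :: "'v set \<Rightarrow> 'e set \<Rightarrow> ('e \<Rightarrow> 'v) \<Rightarrow> ('e \<Rightarrow> 'v) \<Rightarrow> bool" where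
  "acyclic_quiver V E src tgt \<longleftrightarrow>
     (\<forall>v bs. qpath V E src tgt v bs \<and> bs \<noteq> [] \<longrightarrow> pend tgt v bs \<noteq> v)"

text \<open>Lambda is the direct sum over paths gamma = beta_1...beta_r (from i_0 to i_r) of
  A_(i_0) (x) A_(i_1) (x) ... (x) A_(i_r), i.e. the span of A-paths modulo multilinearity.
  A basis index (v, betas, bs) is a path starting at v together with basis indices
  bs!t of A_(i_t), t = 0..r (an elementary tensor of basis elements).\<close>

definition gp_index :: "'v set \<Rightarrow> 'e set \<Rightarrow> ('e \<Rightarrow> 'v) \<Rightarrow> ('e \<Rightarrow> 'v) \<Rightarrow> ('v \<Rightarrow> nat)
    \<Rightarrow> ('v \<times> 'e list \<times> nat list) set" where
  "gp_index V E src tgt dA = {(v, bs, ns). qpath V E src tgt v bs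
     \<and> length ns = length bs + 1 \<and> (\<forall>t<length ns. ns ! t < dA (pverts tgt v bs ! t))}"

definition gp_carrier :: "'v set \<Rightarrow> 'e set \<Rightarrow> ('e \<Rightarrow> 'v) \<Rightarrow> ('e \<Rightarrow> 'v) \<Rightarrow> ('v \<Rightarrow> nat)
    \<Rightarrow> ('v \<times> 'e list \<times> nat list \<Rightarrow> 'k::zero) set" where
  "gp_carrier V E src tgt dA = {x. \<forall>K. K \<notin> gp_index V E src tgt dA \<longrightarrow> x K = 0}"

text \<open>Coefficient of basis element K in the product of basis elements I and J:
  (a_0 b_1 ... b_r a_r)(a'_0 c_1 ... c_s a'_s) = a_0 b_1 ... b_r (a_r a'_0) c_1 ... c_s a'_s
  if the paths compose, and 0 otherwise.\<close>
definition gp_bprod :: "('e \<Rightarrow> 'v) \<Rightarrow> ('v \<Rightarrow> nat \<Rightarrow> nat \<Rightarrow> nat \<Rightarrow> 'k::field)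
    \<Rightarrow> ('v \<times> 'e list \<times> nat list) \<Rightarrow> ('v \<times> 'e list \<times> nat list) \<Rightarrow> ('v \<times> 'e list \<times> nat list) \<Rightarrow> 'k" where
  "gp_bprod tgt cA I J K = (case (I, J, K) of ((v, bs, ns), (w, cs, ms), (u, gs, ls)) \<Rightarrow>
     (if pend tgt v bs = w \<and> u = v \<and> gs = bs @ cs
         \<and> length ls = length ns + length ms - 1
         \<and> take (length ns - 1) ls = butlast ns \<and> drop (length ns) ls = tl ms
      then cA w (last ns) (hd ms) (ls ! (length ns - 1)) else 0))"

definition gp_mult :: "'v set \<Rightarrow> 'e set \<Rightarrow> ('e \<Rightarrow> 'v) \<Rightarrow> ('e \<Rightarrow> 'v) \<Rightarrow> ('v \<Rightarrow> nat)
    \<Rightarrow> ('v \<Rightarrow> nat \<Rightarrow> nat \<Rightarrow> nat \<Rightarrow> 'k::field)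
    \<Rightarrow> ('v \<times> 'e list \<times> nat list \<Rightarrow> 'k) \<Rightarrow> ('v \<times> 'e list \<times> nat list \<Rightarrow> 'k)
    \<Rightarrow> ('v \<times> 'e list \<times> nat list \<Rightarrow> 'k)" where
  "gp_mult V E src tgt dA cA x y = (\<lambda>K. if K \<in> gp_index V E src tgt dA then
     (\<Sum>I\<in>gp_index V E src tgt dA. \<Sum>J\<in>gp_index V E src tgt dA. x I * y J * gp_bprod tgt cA I J K)
     else 0)"

text \<open>Canonical embedding of A_l into Lambda (as trivial A-paths at l).\<close>
definition gp_emb :: "('v \<Rightarrow> nat) \<Rightarrow> 'v \<Rightarrow> (nat \<Rightarrow> 'k::zero) \<Rightarrow> ('v \<times> 'e list \<times> nat list \<Rightarrow> 'k)" where
  "gp_emb dA l a = (\<lambda>(u, gs, ls). if u = l \<and> gs = [] \<and> length ls = 1 \<and> hd ls < dA l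
                                   then a (hd ls) else 0)"

definition gp_proj :: "'v set \<Rightarrow> 'e set \<Rightarrow> ('e \<Rightarrow> 'v) \<Rightarrow> ('e \<Rightarrow> 'v) \<Rightarrow> ('v \<Rightarrow> nat)
    \<Rightarrow> ('v \<Rightarrow> nat \<Rightarrow> nat \<Rightarrow> nat \<Rightarrow> 'k::field) \<Rightarrow> ('v \<Rightarrow> nat \<Rightarrow> nat \<Rightarrow> 'k) \<Rightarrow> 'v \<Rightarrow> nat
    \<Rightarrow> ('v \<times> 'e list \<times> nat list \<Rightarrow> 'k) set" where
  "gp_proj V E src tgt dA cA e i j =
     {gp_mult V E src tgt dA cA (gp_emb dA i (e i j)) y | y. y \<in> gp_carrier V E src tgt dA}"

text \<open>Vertex component X_l = X 1_l of the representation of a right Lambda-module X;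
  it is a right A_l-module via x . a = x a (a viewed in Lambda).\<close>
definition rep_component :: "'v set \<Rightarrow> 'e set \<Rightarrow> ('e \<Rightarrow> 'v) \<Rightarrow> ('e \<Rightarrow> 'v) \<Rightarrow> ('v \<Rightarrow> nat)
    \<Rightarrow> ('v \<Rightarrow> nat \<Rightarrow> nat \<Rightarrow> nat \<Rightarrow> 'k::field) \<Rightarrow> ('v \<Rightarrow> nat \<Rightarrow> 'k)
    \<Rightarrow> ('v \<times> 'e list \<times> nat list \<Rightarrow> 'k) set \<Rightarrow> 'v \<Rightarrow> ('v \<times> 'e list \<times> nat list \<Rightarrow> 'k) set" where
  "rep_component V E src tgt dA cA uA X l =
     {gp_mult V E src tgt dA cA x (gp_emb dA l (uA l)) | x. x \<in> X}"

definition free_rmod :: "nat \<Rightarrow> nat \<Rightarrow> (nat \<Rightarrow> nat \<Rightarrow> 'k::zero) set" where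
  "free_rmod d n = {F. (\<forall>t<n. F t \<in> vec d) \<and> (\<forall>t\<ge>n. F t = vzero)}"

end

theory Submission
  imports Defs
begin

lemma vscale_eq: "vscale c x = (\<lambda>n. c * x n)" by (simp add: vscale_def)

interpretation vs: vector_space "vscale :: 'k::field \<Rightarrow> (nat \<Rightarrow> 'k) \<Rightarrow> (nat \<Rightarrow> 'k)"
  by unfold_locales (auto simp: vscale_def fun_eq_iff algebra_simps)

lemma kdim_eq: "kdim S = vs.dim S" by (simp add: kdim_def)

context fixes V :: "'v set" and E :: "'e set" and src tgt :: "'e \<Rightarrow> 'v" begin

lemma qpath_in: "qpath V E src tgt v bs \<Longrightarrow> v \<in> V"
  by (cases bs) auto

lemma qpath_append: "qpath V E src tgt v (xs @ ys) \<longleftrightarrow> qpath V E src tgt v xs \<and> qpath V E src tgt (pend tgt v xs) ys"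
  by (induction xs arbitrary: v) (auto dest: qpath_in)

lemma pend_append: "pend tgt v (xs @ ys) = pend tgt (pend tgt v xs) ys"
  by (induction xs arbitrary: v) auto

lemma length_pverts[simp]: "length (pverts tgt v bs) = Suc (length bs)"
  by (induction bs arbitrary: v) auto

lemma pverts_nth: "a \<le> length bs \<Longrightarrow> pverts tgt v bs ! a = pend tgt v (take a bs)"
  by (induction bs arbitrary: v a) (auto simp: nth_Cons split: nat.splits)

lemma pverts_0[simp]: "pverts tgt v bs ! 0 = v"
  by (cases bs) auto

lemma pverts_last: "pverts tgt v bs ! length bs = pend tgt v bs"
  by (simp add: pverts_nth)


lemma qpath_pend: "qpath V E src tgt v bs \<Longrightarrow> pend tgt v bs \<in> V"
  by (induction bs arbitrary: v) auto

lemma qpath_pverts: "qpath V E src tgt v bs \<Longrightarrow> set (pverts tgt v bs) \<subseteq> V"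
  by (induction bs arbitrary: v) auto

lemma qpath_edges: "qpath V E src tgt v bs \<Longrightarrow> set bs \<subseteq> E"
  by (induction bs arbitrary: v) auto

lemma qpath_distinct:
  assumes ac: "acyclic_quiver V E src tgt" and p: "qpath V E src tgt v bs"
  shows "distinct (pverts tgt v bs)"
proof (rule ccontr)
  assume "\<not> distinct (pverts tgt v bs)"
  then obtain a b where ab: "a < b" "b < Suc (length bs)" "pverts tgt v bs ! a = pverts tgt v bs ! b"
    by (auto simp: distinct_conv_nth) (metis linorder_neqE_nat)
  define xs where "xs = take a bs"
  define ys where "ys = drop a (take b bs)"
  define zs where "zs = drop b bs"
  have split: "bs = xs @ ys @ zs" using ab
    by (simp add: xs_def ys_def zs_def) (metis append.assoc append_take_drop_id drop_take take_add le_add_diff_inverse less_imp_le_nat)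
  have "take b bs = xs @ ys" using ab by (simp add: xs_def ys_def) (metis append_take_drop_id min.strict_order_iff take_take)
  have yp: "qpath V E src tgt (pend tgt v xs) ys" using p split qpath_append by metis
  have ya: "pverts tgt v bs ! a = pend tgt v xs" using ab by (simp add: pverts_nth xs_def)
  have yb: "pverts tgt v bs ! b = pend tgt (pend tgt v xs) ys" using ab \<open>take b bs = xs @ ys\<close>
    by (simp add: pverts_nth pend_append)
  have "ys \<noteq> []" using ab by (simp add: ys_def)
  with ac yp have "pend tgt (pend tgt v xs) ys \<noteq> pend tgt v xs" by (auto simp: acyclic_quiver_def)
  with ab ya yb show False by simp
qed

lemma finite_paths:
  assumes q: "finite_quiver V E src tgt" and ac: "acyclic_quiver V E src tgt"
  shows "finite {bs. qpath V E src tgt v bs}"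
proof -
  have "{bs. qpath V E src tgt v bs} \<subseteq> {bs. set bs \<subseteq> E \<and> length bs \<le> card V}"
  proof safe
    fix bs assume p: "qpath V E src tgt v bs"
    then show "\<And>x. x \<in> set bs \<Longrightarrow> x \<in> E" using qpath_edges by auto
    have "card (set (pverts tgt v bs)) \<le> card V" using qpath_pverts[OF p] q
      by (intro card_mono) (auto simp: finite_quiver_def)
    then show "length bs \<le> card V" using qpath_distinct[OF ac p] distinct_card by fastforce
  qed
  moreover have "finite {bs. set bs \<subseteq> E \<and> length bs \<le> card V}"
    using q by (intro finite_lists_length_le) (auto simp: finite_quiver_def)
  ultimately show ?thesis by (rule finite_subset)
qed

end


lemma sum_reduce:
  assumes "finite S" "inj_on h A" "h ` A \<subseteq> S" "\<And>x. x \<in> S \<Longrightarrow> x \<notin> h ` A \<Longrightarrow> G x = 0"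
  shows "sum G S = (\<Sum>a\<in>A. G (h a))"
proof -
  have "sum G S = sum G (h ` A)"
    using assms by (intro sum.mono_neutral_right) auto
  also have "\<dots> = (\<Sum>a\<in>A. G (h a))" using assms(2) by (simp add: sum.reindex)
  finally show ?thesis .
qed

lemma path_length_le:
  assumes q: "finite_quiver V E src tgt" and ac: "acyclic_quiver V E src tgt"
    and p: "qpath V E src tgt v bs"
  shows "length bs \<le> card V"
proof -
  have "card (set (pverts tgt v bs)) \<le> card V" using qpath_pverts[OF p] q
    by (intro card_mono) (auto simp: finite_quiver_def)
  then show "length bs \<le> card V" using qpath_distinct[OF ac p] distinct_card by fastforce
qed

locale GP =
  fixes V :: "'v set" and E :: "'e set" and src tgt :: "'e \<Rightarrow> 'v"
    and dA :: "'v \<Rightarrow> nat" and cA :: "'v \<Rightarrow> nat \<Rightarrow> nat \<Rightarrow> nat \<Rightarrow> 'k::field"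
    and uA :: "'v \<Rightarrow> nat \<Rightarrow> 'k"
  assumes quiver: "finite_quiver V E src tgt"
    and acyclic: "acyclic_quiver V E src tgt"
    and algebras: "\<forall>v\<in>V. fd_algebra (dA v) (cA v) (uA v)"
begin

abbreviation "IDX \<equiv> gp_index V E src tgt dA"
abbreviation "gmult \<equiv> gp_mult V E src tgt dA cA"

lemma IDX_iff: "(v, bs, ns) \<in> IDX \<longleftrightarrow> qpath V E src tgt v bs
     \<and> length ns = length bs + 1 \<and> (\<forall>t<length ns. ns ! t < dA (pverts tgt v bs ! t))"
  by (simp add: gp_index_def)

lemma finite_IDX: "finite IDX"
proof -
  define N where "N = (\<Sum>v\<in>V. dA v)"
  have fV: "finite V" "finite E" using quiver by (auto simp: finite_quiver_def)
  have "IDX \<subseteq> V \<times> {bs. set bs \<subseteq> E \<and> length bs \<le> card V} \<times> {ns. set ns \<subseteq> {..<N} \<and> length ns \<le> Suc (card V)}"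
  proof
    fix K assume K0: "K \<in> IDX"
    obtain v bs ns where Kd: "K = (v, bs, ns)" by (cases K) auto
    from K0 have K: "(v, bs, ns) \<in> IDX" by (simp add: Kd)
    then have p: "qpath V E src tgt v bs" and l: "length ns = length bs + 1"
      and b: "\<forall>t<length ns. ns ! t < dA (pverts tgt v bs ! t)" by (auto simp: IDX_iff)
    have "v \<in> V" using qpath_in[OF p] .
    moreover have "set bs \<subseteq> E" using qpath_edges[OF p] .
    moreover have "length bs \<le> card V" using path_length_le[OF quiver acyclic p] .
    moreover have "set ns \<subseteq> {..<N}"
    proof
      fix x assume "x \<in> set ns"
      then obtain t where t: "t < length ns" "x = ns ! t" by (auto simp: in_set_conv_nth)
      have "pverts tgt v bs ! t \<in> V" using qpath_pverts[OF p] t l by (auto simp: set_conv_nth)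
      then have "dA (pverts tgt v bs ! t) \<le> N" unfolding N_def using fV by (intro member_le_sum) auto
      then show "x \<in> {..<N}" using b t by force
    qed
    ultimately show "K \<in> V \<times> {bs. set bs \<subseteq> E \<and> length bs \<le> card V} \<times> {ns. set ns \<subseteq> {..<N} \<and> length ns \<le> Suc (card V)}"
      using l by (auto simp: Kd)
  qed
  moreover have "finite (V \<times> {bs. set bs \<subseteq> E \<and> length bs \<le> card V} \<times> {ns. set ns \<subseteq> {..<N} \<and> length ns \<le> Suc (card V)})"
    using fV by (intro finite_cartesian_product finite_lists_length_le) auto
  ultimately show ?thesis by (rule finite_subset)
qed

lemma bprod_simp: "gp_bprod tgt cA (v, bs, ns) (w, cs, ms) (u, gs, ls) =
     (if pend tgt v bs = w \<and> u = v \<and> gs = bs @ cs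
         \<and> length ls = length ns + length ms - 1
         \<and> take (length ns - 1) ls = butlast ns \<and> drop (length ns) ls = tl ms
      then cA w (last ns) (hd ms) (ls ! (length ns - 1)) else 0)"
  by (simp add: gp_bprod_def)

lemma emb_simp: "gp_emb dA l a (u, gs, ls) = (if u = l \<and> gs = [] \<and> length ls = 1 \<and> hd ls < dA l then a (hd ls) else 0)"
  by (simp add: gp_emb_def)

lemma mult_outside: "K \<notin> IDX \<Longrightarrow> gmult x y K = 0"
  by (simp add: gp_mult_def)

lemma L1:
  assumes l: "l \<in> V"
  shows "gmult (gp_emb dA l a) y (u, gs, ls) =
    (if (u, gs, ls) \<in> IDX \<and> u = l then amult (cA l) (dA l) a (\<lambda>q. y (l, gs, q # tl ls)) (hd ls) else 0)"
proof (cases "(u, gs, ls) \<in> IDX")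
  case False then show ?thesis by (simp add: mult_outside)
next
  case K: True
  let ?x = "gp_emb dA l a"
  let ?h = "\<lambda>p::nat. (l, [] :: 'e list, [p])"
  have hin: "?h ` {..<dA l} \<subseteq> IDX" using l by (auto simp: IDX_iff)
  have step1: "gmult ?x y (u, gs, ls) = (\<Sum>p<dA l. \<Sum>J\<in>IDX. a p * y J * gp_bprod tgt cA (?h p) J (u, gs, ls))"
  proof -
    have "gmult ?x y (u, gs, ls) = (\<Sum>I\<in>IDX. \<Sum>J\<in>IDX. ?x I * y J * gp_bprod tgt cA I J (u, gs, ls))"
      using K by (simp add: gp_mult_def)
    also have "\<dots> = (\<Sum>p<dA l. \<Sum>J\<in>IDX. ?x (?h p) * y J * gp_bprod tgt cA (?h p) J (u, gs, ls))"
    proof (rule sum_reduce[OF finite_IDX _ hin])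
      show "inj_on ?h {..<dA l}" by (auto simp: inj_on_def)
      fix I assume I: "I \<in> IDX" "I \<notin> ?h ` {..<dA l}"
      obtain v bs ns where Id: "I = (v, bs, ns)" by (cases I) auto
      have "?x I = 0"
      proof (rule ccontr)
        assume "?x I \<noteq> 0"
        then have "v = l" "bs = []" "length ns = 1" "hd ns < dA l" by (auto simp: Id emb_simp split: if_splits)
        then have "I = ?h (hd ns)" by (cases ns) (auto simp: Id)
        with I \<open>hd ns < dA l\<close> show False by auto
      qed
      then show "(\<Sum>J\<in>IDX. ?x I * y J * gp_bprod tgt cA I J (u, gs, ls)) = 0" by simp
    qed
    also have "\<dots> = (\<Sum>p<dA l. \<Sum>J\<in>IDX. a p * y J * gp_bprod tgt cA (?h p) J (u, gs, ls))"
      by (intro sum.cong refl) (simp add: emb_simp)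
    finally show ?thesis .
  qed
  show ?thesis
  proof (cases "u = l")
    case False
    then show ?thesis using K unfolding step1 by (auto simp: bprod_simp intro!: sum.neutral)
  next
    case True
    from K True have p: "qpath V E src tgt l gs" and ll: "length ls = length gs + 1"
      and b: "\<forall>t<length ls. ls ! t < dA (pverts tgt l gs ! t)" by (auto simp: IDX_iff)
    have lsne: "ls \<noteq> []" using ll by auto
    have hd0: "hd ls = ls ! 0" using lsne by (simp add: hd_conv_nth)
    have hdl: "hd ls < dA l" using b lsne hd0 by auto
    let ?h' = "\<lambda>q. (l, gs, q # tl ls)"
    have hin': "?h' ` {..<dA l} \<subseteq> IDX"
    proof clarify
      fix q assume q: "q < dA l"
      show "(l, gs, q # tl ls) \<in> IDX" unfolding IDX_iff
      proof (intro conjI p allI impI)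
        show "length (q # tl ls) = length gs + 1" using ll lsne by simp
        fix t assume "t < length (q # tl ls)"
        then show "(q # tl ls) ! t < dA (pverts tgt l gs ! t)" using q b lsne
          by (cases t) (auto simp: nth_tl)
      qed
    qed
    have inner: "(\<Sum>J\<in>IDX. a p * y J * gp_bprod tgt cA (?h p) J (u, gs, ls))
        = (\<Sum>q<dA l. a p * y (l, gs, q # tl ls) * cA l p q (hd ls))" for p
    proof -
      have "(\<Sum>J\<in>IDX. a p * y J * gp_bprod tgt cA (?h p) J (u, gs, ls))
          = (\<Sum>q<dA l. a p * y (?h' q) * gp_bprod tgt cA (?h p) (?h' q) (u, gs, ls))"
      proof (rule sum_reduce[OF finite_IDX _ hin'])
        show "inj_on ?h' {..<dA l}" by (auto simp: inj_on_def)
        fix J assume J: "J \<in> IDX" "J \<notin> ?h' ` {..<dA l}"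
        obtain w cs ms where Jd: "J = (w, cs, ms)" by (cases J) auto
        show "a p * y J * gp_bprod tgt cA (?h p) J (u, gs, ls) = 0"
        proof (rule ccontr)
          assume nz: "a p * y J * gp_bprod tgt cA (?h p) J (u, gs, ls) \<noteq> 0"
          then have c: "l = w" "gs = cs" "length ls = length ms" "drop 1 ls = tl ms"
            using True by (auto simp: Jd bprod_simp split: if_splits)
          from J have Jp: "length ms = length cs + 1" "\<forall>t<length ms. ms ! t < dA (pverts tgt w cs ! t)"
            by (auto simp: Jd IDX_iff)
          have "ms = hd ms # tl ls" using c Jp by (cases ms) (auto simp: drop_Suc)
          moreover have "hd ms < dA l" using Jp c by (cases ms) auto
          ultimately have "J \<in> ?h' ` {..<dA l}" using c by (auto simp: Jd)
          with J show False by simp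
        qed
      qed
      also have "\<dots> = (\<Sum>q<dA l. a p * y (l, gs, q # tl ls) * cA l p q (hd ls))"
        using True lsne ll hd0 by (intro sum.cong refl) (simp add: bprod_simp drop_Suc)
      finally show ?thesis .
    qed
    show ?thesis using K True hdl unfolding step1 inner by (simp add: amult_def mult.assoc)
  qed
qed


lemma L2:
  assumes l: "l \<in> V"
  shows "gmult x (gp_emb dA l a) (u, gs, ls) =
    (if (u, gs, ls) \<in> IDX \<and> pend tgt u gs = l
     then amult (cA l) (dA l) (\<lambda>p. x (u, gs, butlast ls @ [p])) a (last ls) else 0)"
proof (cases "(u, gs, ls) \<in> IDX")
  case False then show ?thesis by (simp add: mult_outside)
next
  case K: True
  let ?y = "gp_emb dA l a"
  let ?h = "\<lambda>p::nat. (l, [] :: 'e list, [p])"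
  have hin: "?h ` {..<dA l} \<subseteq> IDX" using l by (auto simp: IDX_iff)
  from K have p: "qpath V E src tgt u gs" and ll: "length ls = length gs + 1"
      and b: "\<forall>t<length ls. ls ! t < dA (pverts tgt u gs ! t)" by (auto simp: IDX_iff)
  have lsne: "ls \<noteq> []" using ll by auto
  have inner: "(\<Sum>J\<in>IDX. x I * ?y J * gp_bprod tgt cA I J (u, gs, ls))
     = (\<Sum>m<dA l. x I * a m * gp_bprod tgt cA I (?h m) (u, gs, ls))" for I
  proof -
    have "(\<Sum>J\<in>IDX. x I * ?y J * gp_bprod tgt cA I J (u, gs, ls))
       = (\<Sum>m<dA l. x I * ?y (?h m) * gp_bprod tgt cA I (?h m) (u, gs, ls))"
    proof (rule sum_reduce[OF finite_IDX _ hin])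
      show "inj_on ?h {..<dA l}" by (auto simp: inj_on_def)
      fix J assume J: "J \<in> IDX" "J \<notin> ?h ` {..<dA l}"
      obtain v bs ns where Jd: "J = (v, bs, ns)" by (cases J) auto
      have "?y J = 0"
      proof (rule ccontr)
        assume "?y J \<noteq> 0"
        then have "v = l" "bs = []" "length ns = 1" "hd ns < dA l" by (auto simp: Jd emb_simp split: if_splits)
        then have "J = ?h (hd ns)" by (cases ns) (auto simp: Jd)
        with J \<open>hd ns < dA l\<close> show False by auto
      qed
      then show "x I * ?y J * gp_bprod tgt cA I J (u, gs, ls) = 0" by simp
    qed
    also have "\<dots> = (\<Sum>m<dA l. x I * a m * gp_bprod tgt cA I (?h m) (u, gs, ls))"
      by (intro sum.cong refl) (simp add: emb_simp)
    finally show ?thesis .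
  qed
  have start: "gmult x ?y (u, gs, ls) = (\<Sum>I\<in>IDX. \<Sum>m<dA l. x I * a m * gp_bprod tgt cA I (?h m) (u, gs, ls))"
    using K by (simp add: gp_mult_def inner)
  show ?thesis
  proof (cases "pend tgt u gs = l")
    case False
    have "gp_bprod tgt cA I (?h m) (u, gs, ls) = 0" for I m
    proof -
      obtain v bs ns where Id: "I = (v, bs, ns)" by (cases I) auto
      show ?thesis using False by (auto simp: Id bprod_simp)
    qed
    then show ?thesis using K False unfolding start by simp
  next
    case True
    have lastl: "last ls < dA l"
    proof -
      have "ls ! length gs < dA (pverts tgt u gs ! length gs)" using b ll by simp
      then show ?thesis using lsne ll True by (simp add: last_conv_nth pverts_last)
    qed
    let ?h' = "\<lambda>p. (u, gs, butlast ls @ [p])"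
    have hin': "?h' ` {..<dA l} \<subseteq> IDX"
    proof clarify
      fix q assume q: "q < dA l"
      show "(u, gs, butlast ls @ [q]) \<in> IDX" unfolding IDX_iff
      proof (intro conjI p allI impI)
        show "length (butlast ls @ [q]) = length gs + 1" using ll lsne by simp
        fix t assume t: "t < length (butlast ls @ [q])"
        show "(butlast ls @ [q]) ! t < dA (pverts tgt u gs ! t)"
        proof (cases "t < length gs")
          case True then show ?thesis using b ll by (simp add: nth_append nth_butlast)
        next
          case False
          then have "t = length gs" using t ll lsne by simp
          then show ?thesis using q True ll by (simp add: nth_append pverts_last)
        qed
      qed
    qed
    have "(\<Sum>I\<in>IDX. \<Sum>m<dA l. x I * a m * gp_bprod tgt cA I (?h m) (u, gs, ls))
       = (\<Sum>p<dA l. \<Sum>m<dA l. x (?h' p) * a m * gp_bprod tgt cA (?h' p) (?h m) (u, gs, ls))"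
    proof (rule sum_reduce[OF finite_IDX _ hin'])
      show "inj_on ?h' {..<dA l}" by (auto simp: inj_on_def)
      fix I assume I: "I \<in> IDX" "I \<notin> ?h' ` {..<dA l}"
      obtain v bs ns where Id: "I = (v, bs, ns)" by (cases I) auto
      from I have Ip: "length ns = length bs + 1" "\<forall>t<length ns. ns ! t < dA (pverts tgt v bs ! t)"
        by (auto simp: Id IDX_iff)
      have "gp_bprod tgt cA I (?h m) (u, gs, ls) = 0" for m
      proof (rule ccontr)
        assume "gp_bprod tgt cA I (?h m) (u, gs, ls) \<noteq> 0"
        then have c: "pend tgt v bs = l" "u = v" "gs = bs" "length ls = length ns"
          "take (length ns - 1) ls = butlast ns"
          by (auto simp: Id bprod_simp split: if_splits)
        have nsne: "ns \<noteq> []" using Ip by auto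
        have "ns = butlast ls @ [last ns]" using c nsne
          by (metis append_butlast_last_id butlast_conv_take)
        moreover have "last ns < dA l" using Ip(2)[rule_format, of "length bs"] Ip(1) c nsne
          by (simp add: last_conv_nth pverts_last)
        ultimately have "I \<in> ?h' ` {..<dA l}" using c by (auto simp: Id)
        with I show False by simp
      qed
      then show "(\<Sum>m<dA l. x I * a m * gp_bprod tgt cA I (?h m) (u, gs, ls)) = 0" by simp
    qed
    also have "\<dots> = (\<Sum>p<dA l. \<Sum>m<dA l. x (?h' p) * a m * cA l p m (last ls))"
      using True lsne ll by (intro sum.cong refl) (simp add: bprod_simp last_conv_nth butlast_conv_take)
    finally show ?thesis using K True lastl unfolding start by (simp add: amult_def)
  qed
qed

lemma alg: "v \<in> V \<Longrightarrow> fd_algebra (dA v) (cA v) (uA v)" using algebras by auto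

lemma amult_vec: "amult c d x y \<in> vec d"
  by (simp add: amult_def vec_def)

lemma amult_cong: "(\<And>p. p < d \<Longrightarrow> x p = x' p) \<Longrightarrow> (\<And>p. p < d \<Longrightarrow> y p = y' p) \<Longrightarrow> amult c d x y = amult c d x' y'"
  by (auto simp: amult_def fun_eq_iff intro!: sum.cong)

lemma L3:
  assumes l: "l \<in> V" and x: "x \<in> gp_carrier V E src tgt dA"
  shows "gmult x (gp_emb dA l (uA l)) = (\<lambda>(u, gs, ls). if (u, gs, ls) \<in> IDX \<and> pend tgt u gs = l then x (u, gs, ls) else 0)"
proof (rule ext, clarify)
  fix u gs ls
  show "gmult x (gp_emb dA l (uA l)) (u, gs, ls) = (if (u, gs, ls) \<in> IDX \<and> pend tgt u gs = l then x (u, gs, ls) else 0)"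
  proof (cases "(u, gs, ls) \<in> IDX \<and> pend tgt u gs = l")
    case False then show ?thesis by (auto simp: L2[OF l])
  next
    case True
    from True have ll: "length ls = length gs + 1" by (auto simp: IDX_iff)
    have inv: "(\<lambda>p. x (u, gs, butlast ls @ [p])) \<in> vec (dA l)"
      unfolding vec_def
    proof (clarify)
      fix p assume p: "dA l \<le> p"
      have "(u, gs, butlast ls @ [p]) \<notin> IDX"
      proof
        assume "(u, gs, butlast ls @ [p]) \<in> IDX"
        then have "(butlast ls @ [p]) ! length gs < dA (pverts tgt u gs ! length gs)"
          using ll by (auto simp: IDX_iff)
        then show False using p True ll by (simp add: nth_append pverts_last)
      qed
      then show "x (u, gs, butlast ls @ [p]) = 0" using x by (simp add: gp_carrier_def)
    qed
    have "amult (cA l) (dA l) (\<lambda>p. x (u, gs, butlast ls @ [p])) (uA l) = (\<lambda>p. x (u, gs, butlast ls @ [p]))"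
      using alg[OF l] inv by (simp add: fd_algebra_def)
    then show ?thesis using True ll by (simp add: L2[OF l]) (metis append_butlast_last_id list.size(3) Suc_eq_plus1 nat.distinct(1))
  qed
qed
end


lemma card_bounded_lists:
  "finite {ms. length ms = N \<and> (\<forall>t<N. ms ! t < h t)} \<and> card {ms. length ms = N \<and> (\<forall>t<N. ms ! t < h t)} = (\<Prod>t<N. h t)"
proof (induction N)
  case 0
  have "{ms. length ms = 0 \<and> (\<forall>t<0. ms ! t < h t)} = {[]}" by auto
  then show ?case by simp
next
  case (Suc N)
  let ?S = "\<lambda>N. {ms. length ms = N \<and> (\<forall>t<N. ms ! t < h t)}"
  have eq: "?S (Suc N) = (\<lambda>(ms, x). ms @ [x]) ` (?S N \<times> {..<h N})"
  proof (intro set_eqI iffI)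
    fix ms assume "ms \<in> ?S (Suc N)"
    then have ms: "length ms = Suc N" "\<forall>t<Suc N. ms ! t < h t" by auto
    then have "ms = butlast ms @ [last ms]" by (metis append_butlast_last_id list.size(3) nat.distinct(1))
    moreover have "butlast ms \<in> ?S N" using ms by (auto simp: nth_butlast)
    moreover have "last ms < h N" using ms(2)[rule_format, of N] ms(1) by (cases ms rule: rev_cases) auto
    ultimately show "ms \<in> (\<lambda>(ms, x). ms @ [x]) ` (?S N \<times> {..<h N})" by force
  next
    fix ms assume "ms \<in> (\<lambda>(ms, x). ms @ [x]) ` (?S N \<times> {..<h N})"
    then obtain xs x where "ms = xs @ [x]" "xs \<in> ?S N" "x < h N" by auto
    then show "ms \<in> ?S (Suc N)" by (auto simp: nth_append less_Suc_eq)
  qed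
  have inj: "inj_on (\<lambda>(ms, x). ms @ [x]) (?S N \<times> {..<h N})" by (auto simp: inj_on_def)
  show ?case unfolding eq using Suc inj by (simp add: card_image card_cartesian_product)
qed

lemma amult_add2: "amult c d x (a + b) = amult c d x a + amult c d x b"
  by (simp add: amult_def fun_eq_iff algebra_simps sum.distrib)

lemma amult_scale2: "amult c d x (vscale k a) = vscale k (amult c d x a)"
  by (simp add: amult_def fun_eq_iff vscale_def sum_distrib_left algebra_simps)

lemma amult_zero2: "amult c d x 0 = 0"
  by (simp add: amult_def fun_eq_iff)

lemma sum_fun_app: "(\<Sum>k\<in>A. f k) (x::'a) = (\<Sum>k\<in>A. f k x :: 'b::comm_monoid_add)"
  by (induction A rule: infinite_finite_induct) auto

lemma amult_vec0: "amult c d x y \<in> vec d"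
  by (simp add: amult_def vec_def)

lemma amult_cong0: "(\<And>p. p < d \<Longrightarrow> x p = x' p) \<Longrightarrow> (\<And>p. p < d \<Longrightarrow> y p = y' p) \<Longrightarrow> amult c d x y = amult c d x' y'"
  by (auto simp: amult_def fun_eq_iff intro!: sum.cong)

lemma vec_add: "(a :: nat \<Rightarrow> 'k::field) \<in> vec d \<Longrightarrow> b \<in> vec d \<Longrightarrow> a + b \<in> vec d" by (simp add: vec_def)
lemma vec_scale: "(a :: nat \<Rightarrow> 'k::field) \<in> vec d \<Longrightarrow> vscale k a \<in> vec d" by (simp add: vec_def vscale_def)
lemma vec_zero: "(0 :: nat \<Rightarrow> 'k::field) \<in> vec d" by (simp add: vec_def)

lemma rideal_subspace: "vs.subspace (rideal d c (x::nat \<Rightarrow> 'k::field))"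
  unfolding vs.subspace_def
proof (intro conjI ballI allI)
  have "(0::nat\<Rightarrow>'k) = amult c d x 0" by (simp add: amult_zero2)
  then show "0 \<in> rideal d c x" unfolding rideal_def using vec_zero by blast
next
  fix p q assume "p \<in> rideal d c x" "q \<in> rideal d c x"
  then obtain a b where ab: "p = amult c d x a" "q = amult c d x b" "a \<in> vec d" "b \<in> vec d"
    by (auto simp: rideal_def)
  then have "p + q = amult c d x (a + b)" by (simp add: amult_add2)
  then show "p + q \<in> rideal d c x" unfolding rideal_def using vec_add[OF ab(3,4)] by blast
next
  fix k p assume "p \<in> rideal d c x"
  then obtain a where a: "p = amult c d x a" "a \<in> vec d" by (auto simp: rideal_def)
  then have "vscale k p = amult c d x (vscale k a)" by (simp add: amult_scale2)
  then show "vscale k p \<in> rideal d c x" unfolding rideal_def using vec_scale[OF a(2)] by blast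
qed

lemma rideal_vec: "rideal d c x \<subseteq> vec d"
  by (auto simp: rideal_def amult_vec0)

lemma trunc_vec: "(\<lambda>n. if n < d then a n else 0) \<in> vec d" by (simp add: vec_def)

lemma amult_in_rideal: "amult c d x a \<in> rideal d c x"
proof -
  have "amult c d x a = amult c d x (\<lambda>n. if n < d then a n else 0)" by (rule amult_cong0) auto
  then show ?thesis unfolding rideal_def using trunc_vec by blast
qed

lemma vec_span_units: "vec d \<subseteq> vs.span ((\<lambda>k. (\<lambda>n. if n = k then (1::'k::field) else 0)) ` {..<d})"
proof
  fix x :: "nat \<Rightarrow> 'k" assume x: "x \<in> vec d"
  have "x = (\<Sum>k<d. vscale (x k) (\<lambda>n. if n = k then 1 else 0))"
  proof
    fix n show "x n = (\<Sum>k<d. vscale (x k) (\<lambda>n. if n = k then (1::'k) else 0)) n"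
    proof -
      have "(\<Sum>k<d. vscale (x k) (\<lambda>n. if n = k then (1::'k) else 0)) n = (\<Sum>k<d. (if n = k then x k else 0))"
        by (simp add: sum_fun_app vscale_def if_distrib cong: if_cong)
      also have "\<dots> = x n" using x by (cases "n < d") (auto simp: vec_def)
      finally show ?thesis by simp
    qed
  qed
  also have "\<dots> \<in> vs.span ((\<lambda>k. (\<lambda>n. if n = k then (1::'k::field) else 0)) ` {..<d})"
    by (intro vs.span_sum vs.span_scale vs.span_base) auto
  finally show "x \<in> vs.span ((\<lambda>k. (\<lambda>n. if n = k then (1::'k::field) else 0)) ` {..<d})" .
qed

lemma obtain_basis:
  fixes P :: "(nat \<Rightarrow> 'k::field) set"
  assumes sub: "vs.subspace P" and Pv: "P \<subseteq> vec d"
  obtains B where "finite B" "B \<subseteq> P" "vs.independent B" "P = vs.span B" "card B = kdim P"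
proof -
  obtain B where B: "B \<subseteq> P" "vs.independent B" "P \<subseteq> vs.span B" "card B = vs.dim P"
    using vs.basis_exists by blast
  have "finite B"
    using vs.independent_span_bound[OF _ B(2), of "(\<lambda>k. (\<lambda>n. if n = k then (1::'k::field) else 0)) ` {..<d}"]
      B(1) Pv vec_span_units by blast
  moreover have "P = vs.span B" using B sub vs.span_minimal by blast
  ultimately show ?thesis using that B by (simp add: kdim_eq)
qed



locale GPI = GP V E src tgt dA cA uA
  for V :: "'v set" and E :: "'e set" and src tgt :: "'e \<Rightarrow> 'v"
    and dA :: "'v \<Rightarrow> nat" and cA :: "'v \<Rightarrow> nat \<Rightarrow> nat \<Rightarrow> nat \<Rightarrow> 'k::field"
    and uA :: "'v \<Rightarrow> nat \<Rightarrow> 'k" +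
  fixes e :: "'v \<Rightarrow> nat \<Rightarrow> nat \<Rightarrow> 'k" and s :: "'v \<Rightarrow> nat" and i :: 'v and j :: nat
  assumes idems: "\<forall>v\<in>V. complete_prim_orth (dA v) (cA v) (uA v) (e v) (s v)"
    and i: "i \<in> V" and j: "1 \<le> j" "j \<le> s i"
begin

abbreviation "D \<equiv> dA i"
abbreviation "ei \<equiv> e i j"
abbreviation "P \<equiv> rideal (dA i) (cA i) (e i j)"
abbreviation "MM \<equiv> rep_component V E src tgt dA cA uA (gp_proj V E src tgt dA cA e i j)"
abbreviation "CAR \<equiv> gp_carrier V E src tgt dA"

definition Phi :: "'v \<Rightarrow> ('v \<times> 'e list \<times> nat list \<Rightarrow> 'k) \<Rightarrow> ('v \<times> 'e list \<times> nat list \<Rightarrow> 'k)" where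
  "Phi l y = (\<lambda>(u, gs, ls). if (u, gs, ls) \<in> IDX \<and> u = i \<and> pend tgt u gs = l
      then amult (cA i) D ei (\<lambda>q. y (i, gs, q # tl ls)) (hd ls) else 0)"

lemma ei_idem: "ei \<in> vec D" "amult (cA i) D ei ei = ei"
proof -
  have "primitive_idempotent D (cA i) ei" using idems i j by (auto simp: complete_prim_orth_def)
  then show "ei \<in> vec D" "amult (cA i) D ei ei = ei" by (auto simp: primitive_idempotent_def idempotent_in_def)
qed

lemma P_fix: assumes "p \<in> P" shows "amult (cA i) D ei p = p"
proof -
  obtain a where a: "p = amult (cA i) D ei a" "a \<in> vec D" using assms by (auto simp: rideal_def)
  have "amult (cA i) D ei (amult (cA i) D ei a) = amult (cA i) D (amult (cA i) D ei ei) a"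
    using alg[OF i] ei_idem a(2) unfolding fd_algebra_def by metis
  then show ?thesis using a ei_idem by simp
qed

lemma MM_elem: assumes l: "l \<in> V" and y: "y \<in> CAR"
  shows "gmult (gmult (gp_emb dA i ei) y) (gp_emb dA l (uA l)) = Phi l y"
proof -
  have xc: "gmult (gp_emb dA i ei) y \<in> CAR" by (simp add: gp_carrier_def mult_outside)
  show ?thesis unfolding L3[OF l xc] Phi_def
    by (rule ext) (auto simp: L1[OF i])
qed

lemma MM_char: assumes l: "l \<in> V" shows "MM l = Phi l ` CAR"
proof -
  have "MM l = {gmult x (gp_emb dA l (uA l)) | x. x \<in> gp_proj V E src tgt dA cA e i j}"
    by (simp add: rep_component_def)
  also have "\<dots> = Phi l ` CAR"
    unfolding gp_proj_def using MM_elem[OF l] by (auto simp: image_def) (metis MM_elem[OF l])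
  finally show ?thesis .
qed

lemma Phi_carrier: "Phi l y \<in> CAR"
  by (auto simp: gp_carrier_def Phi_def)

lemma zero_carrier: "(\<lambda>_. 0) \<in> CAR" by (simp add: gp_carrier_def)


lemma Phi_i: "Phi i y = gp_emb dA i (amult (cA i) D ei (\<lambda>q. y (i, [], [q])))"
proof (rule ext, clarify)
  fix u gs ls
  have A: "(u, gs, ls) \<in> IDX \<and> u = i \<and> pend tgt u gs = i \<longleftrightarrow> u = i \<and> gs = [] \<and> length ls = 1 \<and> hd ls < D"
  proof
    assume H: "(u, gs, ls) \<in> IDX \<and> u = i \<and> pend tgt u gs = i"
    then have "gs = []" using acyclic by (auto simp: acyclic_quiver_def IDX_iff)
    then show "u = i \<and> gs = [] \<and> length ls = 1 \<and> hd ls < D" using H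
      by (cases ls) (auto simp: IDX_iff)
  next
    assume H: "u = i \<and> gs = [] \<and> length ls = 1 \<and> hd ls < D"
    then show "(u, gs, ls) \<in> IDX \<and> u = i \<and> pend tgt u gs = i" using i
      by (cases ls) (auto simp: IDX_iff)
  qed
  have B: "length ls = 1 \<Longrightarrow> tl ls = []" by (cases ls) auto
  show "Phi i y (u, gs, ls) = gp_emb dA i (amult (cA i) D ei (\<lambda>q. y (i, [], [q]))) (u, gs, ls)"
    unfolding Phi_def emb_simp using A B by auto
qed

lemma part1: "MM i = gp_emb dA i ` P"
proof -
  have "Phi i ` CAR = gp_emb dA i ` P"
  proof
    show "Phi i ` CAR \<subseteq> gp_emb dA i ` P" by (auto simp: Phi_i intro!: imageI amult_in_rideal)
  next
    show "gp_emb dA i ` P \<subseteq> Phi i ` CAR"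
    proof clarify
      fix p assume "p \<in> P"
      then obtain a where a: "p = amult (cA i) D ei a" "a \<in> vec D" by (auto simp: rideal_def)
      define y where "y = (\<lambda>(u, gs :: 'e list, ls). if u = i \<and> gs = [] \<and> length ls = 1 then a (hd ls) else (0::'k))"
      have yc: "y \<in> CAR"
        unfolding gp_carrier_def
      proof (clarify)
        fix u gs ls assume "(u, gs, ls) \<notin> IDX"
        then show "y (u, gs, ls) = 0" using a(2) i
          by (cases ls) (auto simp: y_def IDX_iff vec_def)
      qed
      have "Phi i y = gp_emb dA i p" unfolding Phi_i a(1)
        by (rule arg_cong[where f="gp_emb dA i"], rule amult_cong0) (auto simp: y_def)
      then show "gp_emb dA i p \<in> Phi i ` CAR" using yc by (metis imageI)
    qed
  qed
  then show ?thesis using MM_char[OF i] by simp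
qed
end


context GPI begin

definition Paths :: "'v \<Rightarrow> 'e list set" where
  "Paths l = {\<gamma>. qpath V E src tgt i \<gamma> \<and> pend tgt i \<gamma> = l}"

definition Mids :: "'e list \<Rightarrow> nat list set" where
  "Mids \<gamma> = {ms. length ms = length \<gamma> - 1 \<and> (\<forall>t<length \<gamma> - 1. ms ! t < dA (pverts tgt i \<gamma> ! Suc t))}"

definition sl :: "('v \<times> 'e list \<times> nat list \<Rightarrow> 'k) \<Rightarrow> 'e list \<Rightarrow> nat list \<Rightarrow> nat \<Rightarrow> nat \<Rightarrow> 'k" where
  "sl w \<gamma> ms m = (\<lambda>q. w (i, \<gamma>, q # ms @ [m]))"

lemma IDX_path:
  assumes g: "\<gamma> \<in> Paths l" "\<gamma> \<noteq> []"
  shows "(i, \<gamma>, q # ms @ [m]) \<in> IDX \<longleftrightarrow> q < D \<and> ms \<in> Mids \<gamma> \<and> m < dA l"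
proof -
  let ?r = "length \<gamma>"
  have p: "qpath V E src tgt i \<gamma>" and pe: "pend tgt i \<gamma> = l" using g by (auto simp: Paths_def)
  have last: "pverts tgt i \<gamma> ! ?r = l" using pe by (simp add: pverts_last)
  show ?thesis
  proof
    assume H: "(i, \<gamma>, q # ms @ [m]) \<in> IDX"
    then have len: "length ms = ?r - 1" and b: "\<forall>t<Suc (Suc (length ms)). (q # ms @ [m]) ! t < dA (pverts tgt i \<gamma> ! t)"
      using g by (auto simp: IDX_iff)
    have "q < D" using b[rule_format, of 0] by simp
    moreover have "ms \<in> Mids \<gamma>" unfolding Mids_def
    proof (intro CollectI conjI len allI impI)
      fix t assume "t < ?r - 1"
      then show "ms ! t < dA (pverts tgt i \<gamma> ! Suc t)" using b[rule_format, of "Suc t"] len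
        by (simp add: nth_append)
    qed
    moreover have "m < dA l" using b[rule_format, of "?r"] len g last by (simp add: nth_append)
    ultimately show "q < D \<and> ms \<in> Mids \<gamma> \<and> m < dA l" by simp
  next
    assume H: "q < D \<and> ms \<in> Mids \<gamma> \<and> m < dA l"
    then have len: "length ms = ?r - 1" and b: "\<forall>t<?r - 1. ms ! t < dA (pverts tgt i \<gamma> ! Suc t)"
      by (auto simp: Mids_def)
    show "(i, \<gamma>, q # ms @ [m]) \<in> IDX" unfolding IDX_iff
    proof (intro conjI p allI impI)
      show "length (q # ms @ [m]) = ?r + 1" using len g by simp
      fix t assume t: "t < length (q # ms @ [m])"
      show "(q # ms @ [m]) ! t < dA (pverts tgt i \<gamma> ! t)"
      proof (cases t)
        case 0 then show ?thesis using H by simp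
      next
        case (Suc t')
        show ?thesis
        proof (cases "t' < length ms")
          case True then show ?thesis using b len Suc by (simp add: nth_append)
        next
          case False
          then have "t' = length ms" using t Suc by simp
          then show ?thesis using Suc H len g last by (simp add: nth_append)
        qed
      qed
    qed
  qed
qed

lemma IDX_decomp:
  assumes "(i, \<gamma>, ls) \<in> IDX" "\<gamma> \<noteq> []"
  obtains q ms m where "ls = q # ms @ [m]"
proof -
  have "length ls = length \<gamma> + 1" using assms by (auto simp: IDX_iff)
  then have "length ls \<ge> 2" using assms(2) by (cases \<gamma>) auto
  then obtain q ls' where "ls = q # ls'" "ls' \<noteq> []" by (cases ls) fastforce+
  then show ?thesis using that by (metis append_butlast_last_id)
qed

lemma slice_Phi:
  assumes g: "\<gamma> \<in> Paths l" "\<gamma> \<noteq> []" and ms: "ms \<in> Mids \<gamma>" and m: "m < dA l"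
  shows "sl (Phi l y) \<gamma> ms m = amult (cA i) D ei (\<lambda>q. y (i, \<gamma>, q # ms @ [m]))"
proof
  fix q
  have pe: "pend tgt i \<gamma> = l" using g by (simp add: Paths_def)
  show "sl (Phi l y) \<gamma> ms m q = amult (cA i) D ei (\<lambda>q. y (i, \<gamma>, q # ms @ [m])) q"
  proof (cases "q < D")
    case True
    then show ?thesis using IDX_path[OF g, of q ms m] ms m pe by (simp add: sl_def Phi_def)
  next
    case False
    then show ?thesis using IDX_path[OF g, of q ms m] by (simp add: sl_def Phi_def amult_def)
  qed
qed

lemma slice_in_P:
  assumes l: "l \<in> V" and x: "x \<in> MM l" and g: "\<gamma> \<in> Paths l" "\<gamma> \<noteq> []" and ms: "ms \<in> Mids \<gamma>" and m: "m < dA l"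
  shows "sl x \<gamma> ms m \<in> P"
proof -
  obtain y where "x = Phi l y" using x MM_char[OF l] by auto
  then show ?thesis using slice_Phi[OF g ms m] amult_in_rideal by simp
qed

lemma MM_zero:
  assumes l: "l \<in> V" "l \<noteq> i" and x: "x \<in> MM l"
    and K: "\<not> (\<exists>\<gamma> q ms m. K = (i, \<gamma>, q # ms @ [m]) \<and> \<gamma> \<in> Paths l \<and> \<gamma> \<noteq> [] \<and> ms \<in> Mids \<gamma> \<and> q < D \<and> m < dA l)"
  shows "x K = 0"
proof -
  obtain y where xy: "x = Phi l y" using x MM_char[OF l(1)] by auto
  obtain u gs ls where Kd: "K = (u, gs, ls)" by (cases K) auto
  show ?thesis
  proof (rule ccontr)
    assume "x K \<noteq> 0"
    then have H: "(u, gs, ls) \<in> IDX" "u = i" "pend tgt i gs = l" by (auto simp: xy Kd Phi_def split: if_splits)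
    then have gP: "gs \<in> Paths l" by (auto simp: Paths_def IDX_iff)
    have gne: "gs \<noteq> []" using H l by auto
    obtain q ms m where ls: "ls = q # ms @ [m]" using IDX_decomp[of gs ls] H gne by auto
    have "q < D \<and> ms \<in> Mids gs \<and> m < dA l" using IDX_path[OF gP gne] H ls by simp
    then show False using K gP gne Kd H ls by blast
  qed
qed

end


context GPI begin

lemma finite_Paths: "finite (Paths l)"
  using finite_paths[OF quiver acyclic, of i] by (rule finite_subset[rotated]) (auto simp: Paths_def)

lemma Mids_card: "finite (Mids \<gamma>) \<and> card (Mids \<gamma>) = (\<Prod>t\<in>{1..<length \<gamma>}. dA (pverts tgt i \<gamma> ! t))"
proof -
  have "(\<Prod>t<length \<gamma> - 1. dA (pverts tgt i \<gamma> ! Suc t)) = (\<Prod>t\<in>Suc ` {..<length \<gamma> - 1}. dA (pverts tgt i \<gamma> ! t))"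
    by (simp add: prod.reindex)
  also have "Suc ` {..<length \<gamma> - 1} = {1..<length \<gamma>}"
    by (cases "length \<gamma>") (auto simp: image_Suc_lessThan atLeastLessThanSuc_atLeastAtMost)
  finally show ?thesis unfolding Mids_def
    using card_bounded_lists[of "length \<gamma> - 1" "\<lambda>t. dA (pverts tgt i \<gamma> ! Suc t)"] by simp
qed

lemma card_T:
  assumes "finite B"
  shows "finite (Sigma (Paths l) (\<lambda>\<gamma>. B \<times> Mids \<gamma>))"
    "card (Sigma (Paths l) (\<lambda>\<gamma>. B \<times> Mids \<gamma>)) = (\<Sum>\<gamma>\<in>Paths l. card B * (\<Prod>t\<in>{1..<length \<gamma>}. dA (pverts tgt i \<gamma> ! t)))"
  using assms finite_Paths Mids_card by (auto simp: card_SigmaI card_cartesian_product)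

end


locale GPL = GPI V E src tgt dA cA uA e s i j
  for V :: "'v set" and E :: "'e set" and src tgt :: "'e \<Rightarrow> 'v"
    and dA :: "'v \<Rightarrow> nat" and cA :: "'v \<Rightarrow> nat \<Rightarrow> nat \<Rightarrow> nat \<Rightarrow> 'k::field"
    and uA :: "'v \<Rightarrow> nat \<Rightarrow> 'k"
    and e :: "'v \<Rightarrow> nat \<Rightarrow> nat \<Rightarrow> 'k" and s :: "'v \<Rightarrow> nat" and i :: 'v and j :: nat +
  fixes l :: 'v and B :: "(nat \<Rightarrow> 'k) set" and g :: "nat \<Rightarrow> 'e list \<times> (nat \<Rightarrow> 'k) \<times> nat list"
  assumes l: "l \<in> V" "l \<noteq> i"
    and B: "finite B" "B \<subseteq> P" "vs.independent B" "P = vs.span B"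
    and g: "bij_betw g {0..<card (Sigma (Paths l) (\<lambda>\<gamma>. B \<times> Mids \<gamma>))} (Sigma (Paths l) (\<lambda>\<gamma>. B \<times> Mids \<gamma>))"
begin

abbreviation "TT \<equiv> Sigma (Paths l) (\<lambda>\<gamma>. B \<times> Mids \<gamma>)"
abbreviation "NN \<equiv> card TT"
abbreviation "rep \<equiv> vs.representation B"

definition ff :: "('v \<times> 'e list \<times> nat list \<Rightarrow> 'k) \<Rightarrow> nat \<Rightarrow> nat \<Rightarrow> 'k" where
  "ff w = (\<lambda>t. if t < NN then (\<lambda>(\<gamma>, b, ms). (\<lambda>m. if m < dA l then rep (sl w \<gamma> ms m) b else 0)) (g t) else vzero)"

lemma gT: "t < NN \<Longrightarrow> g t \<in> TT"
  using bij_betw_apply[OF g, of t] by simp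

lemma gsurj: "x \<in> TT \<Longrightarrow> \<exists>t<NN. g t = x"
  using g by (force simp: bij_betw_def)

lemma Paths_ne: "\<gamma> \<in> Paths l \<Longrightarrow> \<gamma> \<noteq> []"
  using l by (auto simp: Paths_def)

lemma slP: "x \<in> MM l \<Longrightarrow> \<gamma> \<in> Paths l \<Longrightarrow> ms \<in> Mids \<gamma> \<Longrightarrow> m < dA l \<Longrightarrow> sl x \<gamma> ms m \<in> vs.span B"
  using slice_in_P[OF l(1) _ _ Paths_ne] B by auto

lemma rep_eq_imp_eq: "v \<in> vs.span B \<Longrightarrow> w \<in> vs.span B \<Longrightarrow> (\<And>b. b \<in> B \<Longrightarrow> rep v b = rep w b) \<Longrightarrow> v = w"
  using vs.sum_representation_eq[OF B(3) _ B(1) order_refl]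
  by (metis (no_types, lifting) sum.cong)

lemma rep_comb: "rep (\<Sum>b\<in>B. vscale (c b) b) b0 = (if b0 \<in> B then c b0 else 0)"
proof -
  have "rep (\<Sum>b\<in>B. vscale (c b) b) b0 = (\<Sum>b\<in>B. rep (vscale (c b) b) b0)"
    using vs.representation_sum[OF B(3), of B "\<lambda>b. vscale (c b) b"]
    by (simp add: vs.span_scale vs.span_base)
  also have "\<dots> = (\<Sum>b\<in>B. c b * (if b0 = b then 1 else 0))"
    by (intro sum.cong refl) (simp add: vs.representation_scale[OF B(3)] vs.span_base vs.representation_basis[OF B(3)])
  also have "\<dots> = (if b0 \<in> B then c b0 else 0)"
    using B(1) by (simp add: if_distrib cong: if_cong)
  finally show ?thesis .
qed

lemma ff_in: "ff x \<in> free_rmod (dA l) NN"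
  by (auto simp: ff_def free_rmod_def vec_def split: prod.splits)

lemma ff_inj: "inj_on ff (MM l)"
proof
  fix x1 x2 assume x: "x1 \<in> MM l" "x2 \<in> MM l" and eq: "ff x1 = ff x2"
  show "x1 = x2"
  proof
    fix K
    show "x1 K = x2 K"
    proof (cases "\<exists>\<gamma> q ms m. K = (i, \<gamma>, q # ms @ [m]) \<and> \<gamma> \<in> Paths l \<and> \<gamma> \<noteq> [] \<and> ms \<in> Mids \<gamma> \<and> q < D \<and> m < dA l")
      case False
      then show ?thesis using MM_zero[OF l x(1) False] MM_zero[OF l x(2) False] by simp
    next
      case True
      then obtain \<gamma> q ms m where K: "K = (i, \<gamma>, q # ms @ [m])" "\<gamma> \<in> Paths l" "ms \<in> Mids \<gamma>" "m < dA l"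
        by blast
      have "sl x1 \<gamma> ms m = sl x2 \<gamma> ms m"
      proof (rule rep_eq_imp_eq[OF slP[OF x(1) K(2-4)] slP[OF x(2) K(2-4)]])
        fix b assume b: "b \<in> B"
        have "(\<gamma>, b, ms) \<in> TT" using b K by simp
        then obtain t where t: "t < NN" "g t = (\<gamma>, b, ms)" using gsurj by blast
        have "ff x1 t m = ff x2 t m" using eq by simp
        then show "rep (sl x1 \<gamma> ms m) b = rep (sl x2 \<gamma> ms m) b" using t K(4) by (simp add: ff_def)
      qed
      then show ?thesis using K(1) by (simp add: sl_def fun_eq_iff)
    qed
  qed
qed

end


context GPL begin

lemma ff_surj: assumes F: "F \<in> free_rmod (dA l) NN" shows "\<exists>x\<in>MM l. ff x = F"
proof -
  define gi where "gi = the_inv_into {0..<NN} g"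
  have gi1: "g (gi z) = z" if "z \<in> TT" for z
    unfolding gi_def using f_the_inv_into_f_bij_betw[OF g that] .
  have gi2: "gi (g t) = t" if "t < NN" for t
    unfolding gi_def using the_inv_into_f_f[OF bij_betw_imp_inj_on[OF g], of t] that by simp
  define pv where "pv \<gamma> ms m = (\<Sum>b\<in>B. vscale (F (gi (\<gamma>, b, ms)) m) b)" for \<gamma> ms m
  have pvP: "pv \<gamma> ms m \<in> P" for \<gamma> ms m
    unfolding pv_def B(4) by (intro vs.span_sum vs.span_scale vs.span_base) auto
  define y where "y = (\<lambda>(u, gs, ls). if (u, gs, ls) \<in> IDX \<and> u = i \<and> pend tgt i gs = l
       then pv gs (butlast (tl ls)) (last ls) (hd ls) else (0::'k))"
  have yc: "y \<in> CAR" by (auto simp: y_def gp_carrier_def)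
  have xM: "Phi l y \<in> MM l" using MM_char[OF l(1)] yc by auto
  have "ff (Phi l y) = F"
  proof (rule ext)
    fix t
    show "ff (Phi l y) t = F t"
    proof (cases "t < NN")
      case False then show ?thesis using F by (simp add: ff_def free_rmod_def)
    next
      case True
      obtain \<gamma> b ms where gt: "g t = (\<gamma>, b, ms)" by (cases "g t") auto
      have mem: "\<gamma> \<in> Paths l" "b \<in> B" "ms \<in> Mids \<gamma>" using gT[OF True] gt by auto
      have gne: "\<gamma> \<noteq> []" using Paths_ne[OF mem(1)] .
      have pe: "pend tgt i \<gamma> = l" using mem(1) by (simp add: Paths_def)
      show ?thesis
      proof (rule ext)
        fix m
        show "ff (Phi l y) t m = F t m"
        proof (cases "m < dA l")
          case False
          then show ?thesis using True gt F by (simp add: ff_def free_rmod_def vec_def)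
        next
          case mlt: True
          have "sl (Phi l y) \<gamma> ms m = amult (cA i) D ei (\<lambda>q. y (i, \<gamma>, q # ms @ [m]))"
            using slice_Phi[OF mem(1) gne mem(3) mlt] .
          also have "\<dots> = amult (cA i) D ei (pv \<gamma> ms m)"
          proof (rule amult_cong0)
            fix q assume q: "q < D"
            have "(i, \<gamma>, q # ms @ [m]) \<in> IDX" using IDX_path[OF mem(1) gne] q mem(3) mlt by simp
            then show "y (i, \<gamma>, q # ms @ [m]) = pv \<gamma> ms m q" using pe by (simp add: y_def)
          qed simp
          also have "\<dots> = pv \<gamma> ms m" using P_fix[OF pvP] .
          finally have "rep (sl (Phi l y) \<gamma> ms m) b = F (gi (\<gamma>, b, ms)) m"
            using mem(2) by (simp add: pv_def rep_comb)
          also have "\<dots> = F t m" using gi2[OF True] gt by simp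
          finally show ?thesis using True gt mlt by (simp add: ff_def)
        qed
      qed
    qed
  qed
  then show ?thesis using xM by blast
qed

lemma ff_add: assumes x: "x \<in> MM l" and y: "y \<in> MM l"
  shows "ff (vadd x y) = vadd (ff x) (ff y)"
proof (rule ext)+
  fix t m
  show "ff (vadd x y) t m = vadd (ff x) (ff y) t m"
  proof (cases "t < NN")
    case False then show ?thesis by (simp add: ff_def vadd_def vzero_def)
  next
    case True
    obtain \<gamma> b ms where gt: "g t = (\<gamma>, b, ms)" by (cases "g t") auto
    have mem: "\<gamma> \<in> Paths l" "b \<in> B" "ms \<in> Mids \<gamma>" using gT[OF True] gt by auto
    show ?thesis
    proof (cases "m < dA l")
      case False then show ?thesis using True gt by (simp add: ff_def vadd_def)
    next
      case mlt: True
      have "sl (vadd x y) \<gamma> ms m = sl x \<gamma> ms m + sl y \<gamma> ms m"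
        by (simp add: sl_def vadd_def fun_eq_iff)
      then have "rep (sl (vadd x y) \<gamma> ms m) b = rep (sl x \<gamma> ms m) b + rep (sl y \<gamma> ms m) b"
        using vs.representation_add[OF B(3) slP[OF y mem(1,3) mlt] slP[OF x mem(1,3) mlt]] by simp
      then show ?thesis using True gt mlt by (simp add: ff_def vadd_def)
    qed
  qed
qed

lemma ff_scale: assumes x: "x \<in> MM l"
  shows "ff (vscale c x) = (\<lambda>t. vscale c (ff x t))"
proof (rule ext)+
  fix t m
  show "ff (vscale c x) t m = vscale c (ff x t) m"
  proof (cases "t < NN")
    case False then show ?thesis by (simp add: ff_def vscale_def vzero_def)
  next
    case True
    obtain \<gamma> b ms where gt: "g t = (\<gamma>, b, ms)" by (cases "g t") auto
    have mem: "\<gamma> \<in> Paths l" "b \<in> B" "ms \<in> Mids \<gamma>" using gT[OF True] gt by auto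
    show ?thesis
    proof (cases "m < dA l")
      case False then show ?thesis using True gt by (simp add: ff_def vscale_def)
    next
      case mlt: True
      have "sl (vscale c x) \<gamma> ms m = vscale c (sl x \<gamma> ms m)"
        by (simp add: sl_def vscale_def fun_eq_iff)
      then have "rep (sl (vscale c x) \<gamma> ms m) b = c * rep (sl x \<gamma> ms m) b"
        using vs.representation_scale[OF B(3) slP[OF x mem(1,3) mlt]] by simp
      then show ?thesis using True gt mlt by (simp add: ff_def vscale_def)
    qed
  qed
qed

end


context GPL begin

lemma ff_mod: assumes x: "x \<in> MM l" and a: "a \<in> vec (dA l)"
  shows "ff (gmult x (gp_emb dA l a)) = (\<lambda>t. amult (cA l) (dA l) (ff x t) a)"
proof (rule ext)+
  fix t m
  show "ff (gmult x (gp_emb dA l a)) t m = amult (cA l) (dA l) (ff x t) a m"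
  proof (cases "t < NN")
    case False then show ?thesis by (simp add: ff_def amult_def vzero_def)
  next
    case True
    obtain \<gamma> b ms where gt: "g t = (\<gamma>, b, ms)" by (cases "g t") auto
    have mem: "\<gamma> \<in> Paths l" "b \<in> B" "ms \<in> Mids \<gamma>" using gT[OF True] gt by auto
    have gne: "\<gamma> \<noteq> []" using Paths_ne[OF mem(1)] .
    have pe: "pend tgt i \<gamma> = l" using mem(1) by (simp add: Paths_def)
    show ?thesis
    proof (cases "m < dA l")
      case False then show ?thesis using True gt by (simp add: ff_def amult_def)
    next
      case mlt: True
      let ?c = "\<lambda>p r. a r * cA l p r m"
      have slv: "sl x \<gamma> ms p \<in> vs.span B" if "p < dA l" for p using slP[OF x mem(1,3) that] .
      have "sl (gmult x (gp_emb dA l a)) \<gamma> ms m = (\<Sum>p<dA l. \<Sum>r<dA l. vscale (?c p r) (sl x \<gamma> ms p))"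
      proof (rule ext)
        fix q
        show "sl (gmult x (gp_emb dA l a)) \<gamma> ms m q = (\<Sum>p<dA l. \<Sum>r<dA l. vscale (?c p r) (sl x \<gamma> ms p)) q"
        proof (cases "q < D")
          case True
          have idx: "(i, \<gamma>, q # ms @ [m]) \<in> IDX" using IDX_path[OF mem(1) gne] True mem(3) mlt by simp
          have bl: "butlast (q # ms @ [m]) = q # ms" by (simp add: butlast_append)
          show ?thesis using idx pe mlt
            by (simp add: sl_def L2[OF l(1)] bl amult_def sum_fun_app vscale_def algebra_simps)
        next
          case False
          have z: "sl x \<gamma> ms p q = 0" if "p < dA l" for p
          proof -
            have "sl x \<gamma> ms p \<in> vec D" using slice_in_P[OF l(1) x mem(1) gne mem(3) that] rideal_vec by blast
            then show ?thesis using False by (simp add: vec_def)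
          qed
          have "(i, \<gamma>, q # ms @ [m]) \<notin> IDX" using IDX_path[OF mem(1) gne] False by simp
          then show ?thesis using z by (simp add: sl_def L2[OF l(1)] sum_fun_app vscale_def)
        qed
      qed
      have in1: "(\<Sum>r<dA l. vscale (?c p r) (sl x \<gamma> ms p)) \<in> vs.span B" if "p \<in> {..<dA l}" for p
        using slv that by (intro vs.span_sum vs.span_scale) auto
      have in2: "vscale (?c p r) (sl x \<gamma> ms p) \<in> vs.span B" if "p \<in> {..<dA l}" for p r
        using slv that by (intro vs.span_scale) auto
      have "rep (\<Sum>p<dA l. \<Sum>r<dA l. vscale (?c p r) (sl x \<gamma> ms p)) b
          = (\<Sum>p<dA l. rep (\<Sum>r<dA l. vscale (?c p r) (sl x \<gamma> ms p)) b)"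
        using vs.representation_sum[OF B(3), of "{..<dA l}" "\<lambda>p. (\<Sum>r<dA l. vscale (?c p r) (sl x \<gamma> ms p))"] in1 by simp
      also have "\<dots> = (\<Sum>p<dA l. \<Sum>r<dA l. rep (vscale (?c p r) (sl x \<gamma> ms p)) b)"
      proof (rule sum.cong[OF refl])
        fix p assume p: "p \<in> {..<dA l}"
        show "rep (\<Sum>r<dA l. vscale (?c p r) (sl x \<gamma> ms p)) b = (\<Sum>r<dA l. rep (vscale (?c p r) (sl x \<gamma> ms p)) b)"
          using vs.representation_sum[OF B(3), of "{..<dA l}" "\<lambda>r. vscale (?c p r) (sl x \<gamma> ms p)"] in2[OF p] by simp
      qed
      also have "\<dots> = (\<Sum>p<dA l. \<Sum>r<dA l. ?c p r * rep (sl x \<gamma> ms p) b)"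
        by (intro sum.cong refl) (simp add: vs.representation_scale[OF B(3) slv])
      finally have "rep (sl (gmult x (gp_emb dA l a)) \<gamma> ms m) b = (\<Sum>p<dA l. \<Sum>r<dA l. ?c p r * rep (sl x \<gamma> ms p) b)"
        using \<open>sl (gmult x (gp_emb dA l a)) \<gamma> ms m = _\<close> by simp
      also have "\<dots> = amult (cA l) (dA l) (ff x t) a m"
        using True gt mlt by (simp add: amult_def ff_def algebra_simps)
      finally show ?thesis using True gt mlt by (simp add: ff_def)
    qed
  qed
qed

end


theorem proposition5p3:
  fixes V :: "'v set" and E :: "'e set" and src tgt :: "'e \<Rightarrow> 'v"
    and dA :: "'v \<Rightarrow> nat" and cA :: "'v \<Rightarrow> nat \<Rightarrow> nat \<Rightarrow> nat \<Rightarrow> 'k::alg_closed_field"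
    and uA :: "'v \<Rightarrow> nat \<Rightarrow> 'k" and e :: "'v \<Rightarrow> nat \<Rightarrow> nat \<Rightarrow> 'k" and s :: "'v \<Rightarrow> nat"
    and i :: 'v and j :: nat
  assumes quiver: "finite_quiver V E src tgt"
    and acyclic: "acyclic_quiver V E src tgt"
    and algebras: "\<forall>v\<in>V. fd_algebra (dA v) (cA v) (uA v)"
    and idems: "\<forall>v\<in>V. complete_prim_orth (dA v) (cA v) (uA v) (e v) (s v)"
    and basic: "\<forall>v\<in>V. basic_algebra (dA v) (cA v) (e v) (s v)"
    and i: "i \<in> V" and j: "1 \<le> j" "j \<le> s i"
  defines "M \<equiv> rep_component V E src tgt dA cA uA (gp_proj V E src tgt dA cA e i j)"
    and "n \<equiv> (\<lambda>l. \<Sum>\<gamma>\<in>{bs. qpath V E src tgt i bs \<and> pend tgt i bs = l}.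
               kdim (rideal (dA i) (cA i) (e i j)) * (\<Prod>t\<in>{1..<length \<gamma>}. dA (pverts tgt i \<gamma> ! t)))"
  shows "M i = gp_emb dA i ` rideal (dA i) (cA i) (e i j)
     \<and> (\<forall>l\<in>V. l \<noteq> i \<longrightarrow>
          (\<exists>f. bij_betw f (M l) (free_rmod (dA l) (n l))
             \<and> (\<forall>x\<in>M l. \<forall>y\<in>M l. f (vadd x y) = vadd (f x) (f y))
             \<and> (\<forall>c x. x \<in> M l \<longrightarrow> f (vscale c x) = (\<lambda>t. vscale c (f x t)))
             \<and> (\<forall>x\<in>M l. \<forall>a\<in>vec (dA l).
                  f (gp_mult V E src tgt dA cA x (gp_emb dA l a)) = (\<lambda>t. amult (cA l) (dA l) (f x t) a)))
          \<and> ((\<nexists>\<gamma>. qpath V E src tgt i \<gamma> \<and> pend tgt i \<gamma> = l) \<longrightarrow> M l = {\<lambda>_. 0}))"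
proof -
  interpret GPI V E src tgt dA cA uA e s i j
    using quiver acyclic algebras idems i j by unfold_locales auto
  have part2: "(\<exists>f. bij_betw f (M l) (free_rmod (dA l) (n l))
             \<and> (\<forall>x\<in>M l. \<forall>y\<in>M l. f (vadd x y) = vadd (f x) (f y))
             \<and> (\<forall>c x. x \<in> M l \<longrightarrow> f (vscale c x) = (\<lambda>t. vscale c (f x t)))
             \<and> (\<forall>x\<in>M l. \<forall>a\<in>vec (dA l).
                  f (gp_mult V E src tgt dA cA x (gp_emb dA l a)) = (\<lambda>t. amult (cA l) (dA l) (f x t) a)))"
    if l: "l \<in> V" "l \<noteq> i" for l
  proof -
    obtain B where B: "finite B" "B \<subseteq> P" "vs.independent B" "P = vs.span B" "card B = kdim P"
      using obtain_basis[OF rideal_subspace rideal_vec] by blast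
    have fT: "finite (Sigma (Paths l) (\<lambda>\<gamma>. B \<times> Mids \<gamma>))" using card_T(1)[OF B(1)] .
    have nl: "card (Sigma (Paths l) (\<lambda>\<gamma>. B \<times> Mids \<gamma>)) = n l"
      using card_T(2)[OF B(1), of l] B(5) by (simp add: n_def Paths_def)
    obtain g where g: "bij_betw g {0..<card (Sigma (Paths l) (\<lambda>\<gamma>. B \<times> Mids \<gamma>))} (Sigma (Paths l) (\<lambda>\<gamma>. B \<times> Mids \<gamma>))"
      using ex_bij_betw_nat_finite[OF fT] by blast
    interpret GPL V E src tgt dA cA uA e s i j l B g
      using l B g by unfold_locales auto
    have bij: "bij_betw ff (MM l) (free_rmod (dA l) NN)"
      unfolding bij_betw_def using ff_inj ff_in ff_surj by blast
    show ?thesis unfolding M_def nl[symmetric]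
      using bij ff_add ff_scale ff_mod by blast
  qed
  have part3: "M l = {\<lambda>_. 0}" if l: "l \<in> V" and np: "\<nexists>\<gamma>. qpath V E src tgt i \<gamma> \<and> pend tgt i \<gamma> = l" for l
  proof -
    have z: "Phi l y = (\<lambda>_. 0)" for y
      using np by (auto simp: Phi_def IDX_iff fun_eq_iff)
    have "Phi l ` CAR = {\<lambda>_. 0}"
    proof
      show "Phi l ` CAR \<subseteq> {\<lambda>_. 0}" using z by auto
      have "Phi l (\<lambda>_. 0) \<in> Phi l ` CAR" using zero_carrier by (rule imageI)
      then show "{\<lambda>_. 0} \<subseteq> Phi l ` CAR" using z by simp
    qed
    then show ?thesis unfolding M_def MM_char[OF l] .
  qed
  show ?thesis
  proof (intro conjI ballI impI)
    show "M i = gp_emb dA i ` P" unfolding M_def by (rule part1)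
  next
    fix l assume "l \<in> V" "l \<noteq> i"
    then show "\<exists>f. bij_betw f (M l) (free_rmod (dA l) (n l))
             \<and> (\<forall>x\<in>M l. \<forall>y\<in>M l. f (vadd x y) = vadd (f x) (f y))
             \<and> (\<forall>c x. x \<in> M l \<longrightarrow> f (vscale c x) = (\<lambda>t. vscale c (f x t)))
             \<and> (\<forall>x\<in>M l. \<forall>a\<in>vec (dA l).
                  f (gp_mult V E src tgt dA cA x (gp_emb dA l a)) = (\<lambda>t. amult (cA l) (dA l) (f x t) a))"
      by (rule part2)
  next
    fix l assume "l \<in> V" "\<nexists>\<gamma>. qpath V E src tgt i \<gamma> \<and> pend tgt i \<gamma> = l"
    then show "M l = {\<lambda>_. 0}" by (rule part3)
  qed
qed


end
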